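(* Let $f_0,f_1,f_2\in\mathbb{C}[[z]]$ be in general position and let $R_j^{[n]}$ be as in the context. For $n\in\mathbb{N}$ put $k_2:=\deg R_1^{[n]}$, $k_1:=\deg R_2^{[n]}$, $k_0:=\deg R_3^{[n]}$ and $\mathbf{k}^{[n]}:=(k_0,k_1,k_2)$. Then $|\mathbf{k}^{[n]}|=k_0+k_1+k_2=n-1$, $$R_1^{[n]}f_2+R_2^{[n]}f_1+R_3^{[n]}f_0=O(z^{n+1}),$$ and $(R_3^{[n]},R_2^{[n]},R_1^{[n]})$ is a tuple of Hermite–Padé polynomials of type I for $[f_0,f_1,f_2]$ and the multiindex $\mathbf{k}^{[n]}$, with order of tangency $|\mathbf{k}^{[n]}|+2=n+1$.
   Context: For $g\in\mathbb{C}[[z]]$, $g=O(z^N)$ means the coefficients of $z^0,\dots,z^{N-1}$ vanish. For $\mathbf{k}=(k_0,\dots,k_m)\in\mathbb{Z}_+^{m+1}$, $|\mathbf{k}|=\sum k_j$, a tuple of polynomials $(Q_0,\dots,Q_m)$, not all zero, with $\deg Q_j\le k_j$ and $\sum_j Q_jf_j=O(z^{|\mathbf{k}|+m})$ is a tuple of Hermite–Padé polynomials of type I for $[f_0,\dots,f_m]$ and $\mathbf{k}$ ($|\mathbf{k}|+m$ is the order of tangency). Construction ($m=2$): put $f_j^{[0]}:=f_j$. For $n\ge0$: $c_j^{[n]}$ is the constant term of $f_j^{[n]}$, $a^{[n]}:=-c_2^{[n]}/c_1^{[n]}$, $b^{[n]}:=-c_1^{[n]}/c_0^{[n]}$, $f_2^{[n+1]}:=f_0^{[n]}$,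 $f_1^{[n+1]}:=z^{-1}(f_2^{[n]}+a^{[n]}f_1^{[n]})$, $f_0^{[n+1]}:=z^{-1}(f_1^{[n]}+b^{[n]}f_0^{[n]})$. Let $M^{[n]}:=\begin{pmatrix}0&0&z\\1&a^{[n]}&0\\0&1&b^{[n]}\end{pmatrix}$ and $A^{[n]}:=M^{[n]}\cdots M^{[0]}$, whose third row is $(R_1^{[n]},R_2^{[n]},R_3^{[n]})$. General position: all $c_j^{[n]}\neq0$, and for every $n\ge0$ and every entry of $A^{[n+1]}=M^{[n+1]}A^{[n]}$ (a sum of at most two products of an entry of $M^{[n+1]}$ and an entry of $A^{[n]}$), the degree of the entry equals the maximum of the degrees of these products (zero polynomial has degree $-\infty$). *)

theory Defs
  imports "HOL-Computational_Algebra.Computational_Algebra" "HOL-Library.Extended_Real"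
begin

type_synonym triple = "complex fps \<times> complex fps \<times> complex fps"

definition bigO_z :: "complex fps \<Rightarrow> nat \<Rightarrow> bool" where
  "bigO_z g N \<longleftrightarrow> (\<forall>i<N. fps_nth g i = 0)"

definition pdeg :: "complex poly \<Rightarrow> ereal" where
  "pdeg p = (if p = 0 then -\<infinity> else ereal (real (degree p)))"

definition hermite_pade_I ::
  "complex fps list \<Rightarrow> nat list \<Rightarrow> complex poly list \<Rightarrow> bool" where
  "hermite_pade_I fs ks Qs \<longleftrightarrow>
     length fs = length ks \<and> length Qs = length fs \<and> fs \<noteq> [] \<and>
     (\<exists>j<length Qs. Qs ! j \<noteq> 0) \<and>
     (\<forall>j<length Qs. degree (Qs ! j) \<le> ks ! j) \<and>
     bigO_z (\<Sum>j<length Qs. fps_of_poly (Qs ! j) * fs ! j)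
            (sum_list ks + (length fs - 1))"

text \<open>One step of the construction. Triples are (f_0, f_1, f_2).
  z^{-1} g is fps_shift 1 g (the constant term of g is zero by construction).\<close>
definition hp_a :: "triple \<Rightarrow> complex" where
  "hp_a t = (case t of (f0, f1, f2) \<Rightarrow> - fps_nth f2 0 / fps_nth f1 0)"

definition hp_b :: "triple \<Rightarrow> complex" where
  "hp_b t = (case t of (f0, f1, f2) \<Rightarrow> - fps_nth f1 0 / fps_nth f0 0)"

definition hp_step :: "triple \<Rightarrow> triple" where
  "hp_step t = (case t of (f0, f1, f2) \<Rightarrow>
     (fps_shift 1 (f1 + fps_const (hp_b t) * f0),
      fps_shift 1 (f2 + fps_const (hp_a t) * f1),
      f0))"

definition hp_iter :: "triple \<Rightarrow> nat \<Rightarrow> triple" where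
  "hp_iter t n = (hp_step ^^ n) t"

text \<open>3x3 polynomial matrices as functions on indices 0,1,2.\<close>
type_synonym pmat = "nat \<Rightarrow> nat \<Rightarrow> complex poly"

definition pmat_mult :: "pmat \<Rightarrow> pmat \<Rightarrow> pmat" where
  "pmat_mult A B = (\<lambda>i j. \<Sum>k<3. A i k * B k j)"

definition hp_M :: "triple \<Rightarrow> nat \<Rightarrow> pmat" where
  "hp_M t n = (\<lambda>i j.
     [[0, 0, [:0, 1:]],
      [1, [:hp_a (hp_iter t n):], 0],
      [0, 1, [:hp_b (hp_iter t n):]]] ! i ! j)"

fun hp_A :: "triple \<Rightarrow> nat \<Rightarrow> pmat" where
  "hp_A t 0 = hp_M t 0"
| "hp_A t (Suc n) = pmat_mult (hp_M t (Suc n)) (hp_A t n)"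

text \<open>General position: all constant terms nonzero, and no degree drop in
  A^{[n+1]} = M^{[n+1]} A^{[n]} (products with zero M-entry have degree -infinity
  and do not affect the maximum).\<close>
definition general_position :: "triple \<Rightarrow> bool" where
  "general_position t \<longleftrightarrow>
     (\<forall>n. case hp_iter t n of (g0, g1, g2) \<Rightarrow>
            fps_nth g0 0 \<noteq> 0 \<and> fps_nth g1 0 \<noteq> 0 \<and> fps_nth g2 0 \<noteq> 0) \<and>
     (\<forall>n i j. i < 3 \<longrightarrow> j < 3 \<longrightarrow>
        pdeg (hp_A t (Suc n) i j) =
          Max ((\<lambda>k. pdeg (hp_M t (Suc n) i k * hp_A t n k j)) ` {..<3}))"

end

theory Submission imports Defs begin

lemma iter_Suc: "hp_iter t (Suc n) = hp_step (hp_iter t n)"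
  by (simp add: hp_iter_def)

definition hv :: "triple \<Rightarrow> nat \<Rightarrow> nat \<Rightarrow> complex fps" where
 "hv t n k = (case hp_iter t n of (g0,g1,g2) \<Rightarrow> [g2,g1,g0] ! k)"

lemma shiftX: "fps_nth (g::complex fps) 0 = 0 \<Longrightarrow> fps_X * fps_shift (Suc 0) g = g"
proof (rule fps_ext)
  fix n assume "fps_nth g 0 = 0" then show "(fps_X * fps_shift (Suc 0) g) $ n = g $ n" by (cases n) auto
qed

lemma sum3: "(\<Sum>k<3. (f::nat\<Rightarrow>'a) k) = f 0 + f 1 + (f 2 :: 'a::comm_monoid_add)"
  by (simp add: numeral_3_eq_3 numeral_2_eq_2 lessThan_Suc add_ac)

lemma gp_c: assumes "general_position t" "hp_iter t n = (g0,g1,g2)"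
  shows "fps_nth g0 0 \<noteq> 0" "fps_nth g1 0 \<noteq> 0" "fps_nth g2 0 \<noteq> 0"
proof -
  have "case hp_iter t n of (g0, g1, g2) \<Rightarrow>
            fps_nth g0 0 \<noteq> 0 \<and> fps_nth g1 0 \<noteq> 0 \<and> fps_nth g2 0 \<noteq> 0"
    using assms(1) unfolding general_position_def by (rule conjunct1[THEN spec])
  then show "fps_nth g0 0 \<noteq> 0" "fps_nth g1 0 \<noteq> 0" "fps_nth g2 0 \<noteq> 0"
    using assms(2) by simp_all
qed

lemma step_id:
  assumes "general_position t" "i < 3"
  shows "(\<Sum>k<3. fps_of_poly (hp_M t n i k) * hv t n k) = fps_X * hv t (Suc n) i"
proof -
  obtain g0 g1 g2 where g: "hp_iter t n = (g0,g1,g2)" by (cases "hp_iter t n") auto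
  note c = gp_c[OF assms(1) g]
  have i: "i = 0 \<or> i = 1 \<or> i = 2" using assms(2) by auto
  have e1: "fps_nth (g2 + fps_const (- fps_nth g2 0 / fps_nth g1 0) * g1) 0 = 0"
    using c by simp
  have e2: "fps_nth (g1 + fps_const (- fps_nth g1 0 / fps_nth g0 0) * g0) 0 = 0"
    using c by simp
  show ?thesis using i
    by (auto simp: sum3 hp_M_def hv_def g iter_Suc hp_step_def hp_a_def hp_b_def
        fps_of_poly_const shiftX c)
qed

lemma A_id:
  assumes "general_position t"
  shows "i < 3 \<Longrightarrow> (\<Sum>j<3. fps_of_poly (hp_A t n i j) * hv t 0 j) = fps_X^(Suc n) * hv t (Suc n) i"
proof (induction n arbitrary: i)
  case 0
  then show ?case using step_id[OF assms, of i 0] by simp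
next
  case (Suc n)
  have "(\<Sum>j<3. fps_of_poly (hp_A t (Suc n) i j) * hv t 0 j)
      = (\<Sum>j<3. \<Sum>k<3. fps_of_poly (hp_M t (Suc n) i k) * (fps_of_poly (hp_A t n k j) * hv t 0 j))"
    by (simp add: pmat_mult_def fps_of_poly_sum fps_of_poly_mult sum_distrib_right mult.assoc)
  also have "\<dots> = (\<Sum>k<3. fps_of_poly (hp_M t (Suc n) i k) * (\<Sum>j<3. fps_of_poly (hp_A t n k j) * hv t 0 j))"
    by (subst sum.swap) (simp add: sum_distrib_left)
  also have "\<dots> = (\<Sum>k<3. fps_of_poly (hp_M t (Suc n) i k) * (fps_X^(Suc n) * hv t (Suc n) k))"
    using Suc.IH by (intro sum.cong) auto
  also have "\<dots> = fps_X^(Suc n) * (\<Sum>k<3. fps_of_poly (hp_M t (Suc n) i k) * hv t (Suc n) k)"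
    by (simp add: sum_distrib_left mult_ac)
  also have "\<dots> = fps_X^(Suc (Suc n)) * hv t (Suc (Suc n)) i"
    using step_id[OF assms Suc.prems, of "Suc n"] by (simp add: mult_ac)
  finally show ?case .
qed


lemma pdeg_ne_inf: "pdeg p \<noteq> \<infinity>"
  by (simp add: pdeg_def)

lemma pdeg_mult: "pdeg (p * q) = pdeg p + pdeg q"
  by (simp add: pdeg_def degree_mult_eq)

lemma minf_plus: "(x::ereal) \<noteq> \<infinity> \<Longrightarrow> -\<infinity> + x = -\<infinity>"
  by (cases x) auto

lemma img3: "(\<lambda>k. (f::nat\<Rightarrow>'a) k) ` {..<3} = {f 0, f 1, f 2}"
  by (auto simp: numeral_3_eq_3 numeral_2_eq_2 lessThan_Suc)

lemma Max3: "Max {x, y, z::ereal} = max x (max y z)"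
  by (simp add: max.assoc)

lemma ab_nz:
  assumes "general_position t"
  shows "hp_a (hp_iter t n) \<noteq> 0" "hp_b (hp_iter t n) \<noteq> 0"
proof -
  obtain g0 g1 g2 where g: "hp_iter t n = (g0,g1,g2)" by (cases "hp_iter t n") auto
  note c = gp_c[OF assms(1) g]
  show "hp_a (hp_iter t n) \<noteq> 0" "hp_b (hp_iter t n) \<noteq> 0"
    using c by (simp_all add: g hp_a_def hp_b_def)
qed

lemma gp_deg:
  assumes "general_position t" "i < 3" "j < 3"
  shows "pdeg (hp_A t (Suc n) i j) =
          Max ((\<lambda>k. pdeg (hp_M t (Suc n) i k * hp_A t n k j)) ` {..<3})"
  using assms unfolding general_position_def by blast

lemma pdeg_simps: "pdeg 0 = -\<infinity>" "pdeg 1 = 0" "pdeg [:0, 1:] = 1"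
  "c \<noteq> 0 \<Longrightarrow> pdeg [:c:] = 0"
  by (simp_all add: pdeg_def)

lemma deg_step:
  assumes gp: "general_position t" and j: "j < 3"
  shows "pdeg (hp_A t (Suc n) 0 j) = 1 + pdeg (hp_A t n 2 j)"
    "pdeg (hp_A t (Suc n) 1 j) = max (pdeg (hp_A t n 0 j)) (pdeg (hp_A t n 1 j))"
    "pdeg (hp_A t (Suc n) 2 j) = max (pdeg (hp_A t n 1 j)) (pdeg (hp_A t n 2 j))"
  using gp_deg[OF gp _ j, of 0 n] gp_deg[OF gp _ j, of 1 n] gp_deg[OF gp _ j, of 2 n]
    ab_nz[OF gp, of "Suc n"]
  by (simp_all add: img3 Max3 pdeg_mult hp_M_def pdeg_simps minf_plus pdeg_ne_inf max.commute)

definition col :: "triple \<Rightarrow> nat \<Rightarrow> nat \<Rightarrow> ereal \<times> ereal \<times> ereal" where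
  "col t n j = (pdeg (hp_A t n 0 j), pdeg (hp_A t n 1 j), pdeg (hp_A t n 2 j))"

definition sd :: "nat \<Rightarrow> ereal \<times> ereal \<times> ereal" where
  "sd m = (ereal (real (m div 3 + 1)), ereal (real ((m+2) div 3)), ereal (real ((m+1) div 3)))"

lemma max_er: "max (ereal (real a)) (ereal (real b)) = ereal (real (max a b))"
  by (simp add: max_def)

lemma one_er: "1 + ereal (real a) = ereal (real (a + 1))"
  by simp

lemma div3_simps: "Suc (3*q) div 3 = q" "Suc (Suc (3*q)) div 3 = q"
  "Suc (Suc (Suc (3*q))) div 3 = Suc q" "(3*q) div 3 = (q::nat)"
  by presburger+

lemma col_step:
  assumes gp: "general_position t" and j: "j < 3" and c: "col t n j = sd m"
  shows "col t (Suc n) j = sd (Suc m)"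
proof -
  have h: "pdeg (hp_A t n 0 j) = ereal (real (m div 3 + 1))"
    "pdeg (hp_A t n 1 j) = ereal (real ((m+2) div 3))"
    "pdeg (hp_A t n 2 j) = ereal (real ((m+1) div 3))"
    using c by (simp_all add: col_def sd_def)
  define q r where "q = m div 3" and "r = m mod 3"
  have mq: "m = 3 * q + r" and r: "r < 3" by (simp_all add: q_def r_def)
  have rr: "r = 0 \<or> r = 1 \<or> r = 2" using r by auto
  have n1: "max (m div 3 + 1) ((m+2) div 3) = (Suc m + 2) div 3"
    using rr unfolding mq by (auto simp: div3_simps)
  have n2: "max ((m+2) div 3) ((m+1) div 3) = (Suc m + 1) div 3"
    using rr unfolding mq by (auto simp: div3_simps)
  have n3: "(m+1) div 3 + 1 = Suc m div 3 + 1" by simp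
  show ?thesis
    unfolding col_def sd_def deg_step[OF gp j] h max_er one_er n1 n2 n3 by simp
qed

lemma col_iter:
  assumes gp: "general_position t" and j: "j < 3" and c: "col t n j = sd m"
  shows "col t (n + k) j = sd (m + k)"
  by (induction k) (use c col_step[OF gp j] in auto)

lemma A0: "hp_A t 0 = hp_M t 0" by simp

lemma col_base:
  assumes gp: "general_position t"
  shows "col t 2 0 = sd 0" "col t 1 1 = sd 0" "col t 1 2 = sd 1"
    "pdeg (hp_A t 1 2 0) = 0"
proof -
  have a: "hp_a (hp_iter t 0) \<noteq> 0" "hp_b (hp_iter t 0) \<noteq> 0" using ab_nz[OF gp] by auto
  have d0: "pdeg (hp_A t 0 0 0) = -\<infinity>" "pdeg (hp_A t 0 1 0) = 0" "pdeg (hp_A t 0 2 0) = -\<infinity>"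
    "pdeg (hp_A t 0 0 1) = -\<infinity>" "pdeg (hp_A t 0 1 1) = 0" "pdeg (hp_A t 0 2 1) = 0"
    "pdeg (hp_A t 0 0 2) = 1" "pdeg (hp_A t 0 1 2) = -\<infinity>" "pdeg (hp_A t 0 2 2) = 0"
    using a by (simp_all add: hp_M_def pdeg_simps)
  have s0: "j < 3 \<Longrightarrow> pdeg (hp_A t (Suc 0) 0 j) = 1 + pdeg (hp_A t 0 2 j)"
    "j < 3 \<Longrightarrow> pdeg (hp_A t (Suc 0) 1 j) = max (pdeg (hp_A t 0 0 j)) (pdeg (hp_A t 0 1 j))"
    "j < 3 \<Longrightarrow> pdeg (hp_A t (Suc 0) 2 j) = max (pdeg (hp_A t 0 1 j)) (pdeg (hp_A t 0 2 j))" for j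
    using deg_step[OF gp, of j 0] by auto
  have d1: "pdeg (hp_A t 1 0 0) = -\<infinity>" "pdeg (hp_A t 1 1 0) = 0" "pdeg (hp_A t 1 2 0) = 0"
    "pdeg (hp_A t 1 0 1) = 1" "pdeg (hp_A t 1 1 1) = 0" "pdeg (hp_A t 1 2 1) = 0"
    "pdeg (hp_A t 1 0 2) = 1" "pdeg (hp_A t 1 1 2) = 1" "pdeg (hp_A t 1 2 2) = 0"
    using s0[of 0] s0[of 1] s0[of 2] d0 by simp_all
  have s1: "pdeg (hp_A t (Suc 1) 0 0) = 1 + pdeg (hp_A t 1 2 0)"
    "pdeg (hp_A t (Suc 1) 1 0) = max (pdeg (hp_A t 1 0 0)) (pdeg (hp_A t 1 1 0))"
    "pdeg (hp_A t (Suc 1) 2 0) = max (pdeg (hp_A t 1 1 0)) (pdeg (hp_A t 1 2 0))"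
    using deg_step[OF gp, of 0 1] by auto
  show "col t 2 0 = sd 0" using s1 d1 by (simp add: col_def sd_def numeral_2_eq_2)
  show "col t 1 1 = sd 0" "col t 1 2 = sd 1" "pdeg (hp_A t 1 2 0) = 0"
    using d1 by (simp_all add: col_def sd_def)
qed

lemma pdeg_nat: "pdeg p = ereal (real k) \<Longrightarrow> p \<noteq> 0 \<and> degree p = k"
  by (auto simp: pdeg_def split: if_splits)


lemma div3_sum: "1 \<le> (n::nat) \<Longrightarrow> (n+1) div 3 + n div 3 + (n - 1) div 3 = n - 1"
proof -
  assume "1 \<le> n"
  then obtain m where m: "n = Suc m" by (cases n) auto
  define q r where "q = m div 3" and "r = m mod 3"
  have mq: "m = 3 * q + r" and r: "r < 3" by (simp_all add: q_def r_def)
  have "r = 0 \<or> r = 1 \<or> r = 2" using r by auto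
  then show ?thesis unfolding m using mq by (auto simp: div3_simps)
qed

lemma hv0: "hv (f0, f1, f2) 0 0 = f2" "hv (f0, f1, f2) 0 1 = f1" "hv (f0, f1, f2) 0 (Suc 0) = f1" "hv (f0, f1, f2) 0 2 = f0"
  by (simp_all add: hv_def hp_iter_def)

theorem corollary1:
  fixes f0 f1 f2 :: "complex fps" and n :: nat
  assumes "general_position (f0, f1, f2)"
    and "n \<ge> 1"
  defines "R1 \<equiv> hp_A (f0, f1, f2) n 2 0"
    and "R2 \<equiv> hp_A (f0, f1, f2) n 2 1"
    and "R3 \<equiv> hp_A (f0, f1, f2) n 2 2"
  shows "pdeg R3 + pdeg R2 + pdeg R1 = ereal (real n - 1) \<and>
         bigO_z (fps_of_poly R1 * f2 + fps_of_poly R2 * f1 + fps_of_poly R3 * f0) (n + 1) \<and>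
         hermite_pade_I [f0, f1, f2] [degree R3, degree R2, degree R1] [R3, R2, R1] \<and>
         degree R3 + degree R2 + degree R1 + 2 = n + 1"
proof -
  define t where "t = (f0, f1, f2)"
  have gp: "general_position t" using assms(1) by (simp add: t_def)
  note cb = col_base[OF gp]
  have c3: "col t n 2 = sd n"
    using col_iter[OF gp _ cb(3), of "n - 1"] assms(2) by simp
  have c2: "col t n 1 = sd (n - 1)"
    using col_iter[OF gp _ cb(2), of "n - 1"] assms(2) by simp
  have d3: "pdeg R3 = ereal (real ((n+1) div 3))"
    using c3 by (simp add: R3_def t_def col_def sd_def)
  have d2: "pdeg R2 = ereal (real (n div 3))"
    using c2 assms(2) by (simp add: R2_def t_def col_def sd_def)
  have d1: "pdeg R1 = ereal (real ((n - 1) div 3))"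
  proof (cases "n = 1")
    case True then show ?thesis using cb(4) by (simp add: R1_def t_def)
  next
    case False
    then obtain k where k: "n = Suc (Suc k)" using assms(2)
      by (metis One_nat_def Suc_le_D le_SucE le_zero_eq)
    then have "col t n 0 = sd (n - 2)"
      using col_iter[OF gp _ cb(1), of k] by (simp add: numeral_2_eq_2)
    then show ?thesis using False assms(2)
      by (simp add: R1_def t_def col_def sd_def Suc_diff_Suc numeral_2_eq_2)
  qed
  have ar: "(n+1) div 3 + n div 3 + (n - 1) div 3 = n - 1" using assms(2) by (rule div3_sum)
  have p3: "R3 \<noteq> 0 \<and> degree R3 = (n+1) div 3" by (rule pdeg_nat[OF d3])
  have p2: "R2 \<noteq> 0 \<and> degree R2 = n div 3" by (rule pdeg_nat[OF d2])
  have p1: "R1 \<noteq> 0 \<and> degree R1 = (n - 1) div 3" by (rule pdeg_nat[OF d1])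
  have G1: "pdeg R3 + pdeg R2 + pdeg R1 = ereal (real n - 1)"
  proof -
    have "pdeg R3 + pdeg R2 + pdeg R1 = ereal (real ((n+1) div 3 + n div 3 + (n - 1) div 3))"
      unfolding d1 d2 d3 by simp
    also have "\<dots> = ereal (real n - 1)" unfolding ar using assms(2) by (simp add: of_nat_diff)
    finally show ?thesis .
  qed
  have G4: "degree R3 + degree R2 + degree R1 + 2 = n + 1"
    using p1 p2 p3 ar assms(2) by simp
  have id: "fps_of_poly R1 * f2 + fps_of_poly R2 * f1 + fps_of_poly R3 * f0
          = fps_X ^ Suc n * hv t (Suc n) 2"
    using A_id[OF gp, of 2 n] by (simp add: sum3 R1_def R2_def R3_def t_def hv0)
  have G2: "bigO_z (fps_of_poly R1 * f2 + fps_of_poly R2 * f1 + fps_of_poly R3 * f0) (n + 1)"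
    unfolding bigO_z_def id by (simp del: power_Suc add: fps_X_power_mult_nth)
  have G3: "hermite_pade_I [f0, f1, f2] [degree R3, degree R2, degree R1] [R3, R2, R1]"
  proof -
    have "(\<Sum>j<length [R3, R2, R1]. fps_of_poly ([R3, R2, R1] ! j) * [f0, f1, f2] ! j)
        = fps_of_poly R1 * f2 + fps_of_poly R2 * f1 + fps_of_poly R3 * f0"
      by (simp add: sum3 add_ac)
    moreover have "sum_list [degree R3, degree R2, degree R1] + (length [f0, f1, f2] - 1) = n + 1"
      using G4 by simp
    moreover have "\<forall>j<length [R3, R2, R1]. degree ([R3, R2, R1] ! j) \<le> [degree R3, degree R2, degree R1] ! j"
      by (auto simp: less_Suc_eq numeral_3_eq_3)
    moreover have "\<exists>j<length [R3, R2, R1]. [R3, R2, R1] ! j \<noteq> 0"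
      using p3 by (intro exI[of _ 0]) simp
    ultimately show ?thesis using G2 unfolding hermite_pade_I_def by (simp add: add_ac)
  qed
  show ?thesis using G1 G2 G3 G4 by blast
qed

end
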